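(* Let $\eta,\xi\in\Omega_n$ with $\eta\preceq\xi$ and let $i\in\{1,\dots,n\}$. Let $a=\min\{\xi(i-1),\xi(i+1)\}$, $b=\max\{\xi(i-1),\xi(i+1)\}$, $c=\min\{\eta(i-1),\eta(i+1)\}$, $d=\max\{\eta(i-1),\eta(i+1)\}$. Then $$0\le m(a,b)-m(c,d)\le\frac{a+b}{2}-\frac{c+d}{2},$$ where $m(x,y)$ denotes the expected value of a random variable with law $\mu_{xy}$.
   Context: Fix $\beta>0$ and integer $n\ge1$. $\Omega_n=\{0,\dots,n\}^n$, with boundary convention $\eta(0)=\eta(n+1)=0$ for every configuration. Partial order: $\eta\preceq\xi$ iff $\eta(i)\le\xi(i)$ for all $i\in\{1,\dots,n\}$. For integers $0\le x\le y\le n$, $\mu_{xy}$ is the distribution on $\{0,\dots,n\}$ with $\mu_{xy}(j)\propto e^{-2\beta(x-j)}$ for $0\le j<x$, $\mu_{xy}(j)\propto 1$ for $x\le j\le y$, and $\mu_{xy}(j)\propto e^{-2\beta(j-y)}$ for $y<j\le n$. Thus $m(a,b)$ and $m(c,d)$ are the expected new heights at $i$ after a column (heat-bath) update at position $i$ in configurations $\xi$ and $\eta$ respectively, for the SOS Gibbs distribution $\mu(\eta)\propto\exp\{-\beta\sum_{k=1}^{n+1}|\eta(k-1)-\eta(k)|\}$. *)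

theory Defs
  imports Complex_Main
begin

text \<open>Configurations are functions nat to nat; only the values at 1..n matter.
  The boundary convention eta(0) = eta(n+1) = 0 is imposed by bnd.\<close>

definition Omega :: "nat \<Rightarrow> (nat \<Rightarrow> nat) set" where
  "Omega n = {\<eta>. \<forall>i\<in>{1..n}. \<eta> i \<le> n}"

definition bnd :: "nat \<Rightarrow> (nat \<Rightarrow> nat) \<Rightarrow> nat \<Rightarrow> nat" where
  "bnd n \<eta> k = (if k = 0 \<or> k = n + 1 then 0 else \<eta> k)"

definition preceq :: "nat \<Rightarrow> (nat \<Rightarrow> nat) \<Rightarrow> (nat \<Rightarrow> nat) \<Rightarrow> bool" where
  "preceq n \<eta> \<xi> \<longleftrightarrow> (\<forall>i\<in>{1..n}. \<eta> i \<le> \<xi> i)"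

definition wt :: "real \<Rightarrow> nat \<Rightarrow> nat \<Rightarrow> nat \<Rightarrow> real" where
  "wt \<beta> x y j = (if j < x then exp (-2*\<beta>*(real x - real j))
                  else if j \<le> y then 1
                  else exp (-2*\<beta>*(real j - real y)))"

definition mu :: "real \<Rightarrow> nat \<Rightarrow> nat \<Rightarrow> nat \<Rightarrow> nat \<Rightarrow> real" where
  "mu \<beta> n x y j = wt \<beta> x y j / (\<Sum>k=0..n. wt \<beta> x y k)"

definition m :: "real \<Rightarrow> nat \<Rightarrow> nat \<Rightarrow> nat \<Rightarrow> real" where
  "m \<beta> n x y = (\<Sum>j=0..n. real j * mu \<beta> n x y j)"

end

theory Submission
  imports Defs
begin



definition g :: "real \<Rightarrow> nat \<Rightarrow> nat \<Rightarrow> real" where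
  "g q x j = (if j < x then q ^ (x - j) else 1)"
definition LA :: "real \<Rightarrow> nat \<Rightarrow> nat \<Rightarrow> real" where
  "LA q x y = (\<Sum>j=0..y. g q x j)"
definition LV :: "real \<Rightarrow> nat \<Rightarrow> nat \<Rightarrow> real" where
  "LV q x y = (\<Sum>j=0..y. (real y - real j) * g q x j)"

lemma LA_Suc: "LA q x (Suc y) = LA q x y + g q x (Suc y)"
  by (simp add: LA_def)
lemma LV_Suc: "LV q x (Suc y) = LV q x y + LA q x y"
proof -
  have "LV q x (Suc y) = (\<Sum>j=0..y. (real (Suc y) - real j) * g q x j)"
    by (simp add: LV_def)
  also have "\<dots> = (\<Sum>j=0..y. (real y - real j) * g q x j + g q x j)"
    by (rule sum.cong) (auto simp: algebra_simps)
  finally show ?thesis by (simp add: LV_def LA_def sum.distrib)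
qed

lemma g_Suc: "j \<le> y \<Longrightarrow> g q (Suc y) j = q * g q y j"
  by (auto simp: g_def Suc_diff_le)

lemma LA_diag: "LA q (Suc y) (Suc y) = 1 + q * LA q y y"
proof -
  have "LA q (Suc y) (Suc y) = (\<Sum>j=0..y. q * g q y j) + 1"
    by (simp add: LA_def g_Suc g_def[of q "Suc y" "Suc y"])
  thus ?thesis by (simp add: LA_def sum_distrib_left)
qed

lemma LV_diag: "LV q (Suc y) (Suc y) = q * (LV q y y + LA q y y)"
proof -
  have "LV q (Suc y) (Suc y) = (\<Sum>j=0..y. q * ((real y - real j) * g q y j + g q y j))"
    by (simp add: LV_def g_Suc algebra_simps)
  also have "\<dots> = q * (\<Sum>j=0..y. (real y - real j) * g q y j + g q y j)"
    by (rule sum_distrib_left[symmetric])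
  finally show ?thesis by (simp add: LV_def LA_def sum.distrib)
qed

lemma left_inv:
  assumes q: "0 < q" "q < 1"
  shows "\<forall>x\<le>y. LA q x y \<ge> 1 \<and> LV q x y \<le> LA q x y * (LA q x y - 1)
     \<and> 2 * LV q x y + LA q x y - (LA q x y)^2 \<le> q / (1-q)^2
     \<and> (x = y \<longrightarrow> (1-q) * LA q x y \<le> 1)"
proof (induction y)
  case 0
  then show ?case using q by (simp add: LA_def LV_def g_def)
next
  case (Suc y)
  show ?case
  proof (intro allI impI)
    fix x assume x: "x \<le> Suc y"
    show "LA q x (Suc y) \<ge> 1 \<and> LV q x (Suc y) \<le> LA q x (Suc y) * (LA q x (Suc y) - 1)
     \<and> 2 * LV q x (Suc y) + LA q x (Suc y) - (LA q x (Suc y))^2 \<le> q / (1-q)^2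
     \<and> (x = Suc y \<longrightarrow> (1-q) * LA q x (Suc y) \<le> 1)"
    proof (cases "x \<le> y")
      case True
      with Suc.IH have ih: "LA q x y \<ge> 1" "LV q x y \<le> LA q x y * (LA q x y - 1)"
        "2 * LV q x y + LA q x y - (LA q x y)^2 \<le> q / (1-q)^2" by auto
      have g1: "g q x (Suc y) = 1" using True by (simp add: g_def)
      have a: "LA q x (Suc y) = LA q x y + 1" by (simp add: LA_Suc g1)
      have v: "LV q x (Suc y) = LV q x y + LA q x y" by (simp add: LV_Suc)
      have e: "2 * LV q x (Suc y) + LA q x (Suc y) - (LA q x (Suc y))^2
            = 2 * LV q x y + LA q x y - (LA q x y)^2"
        by (simp add: a v power2_eq_square algebra_simps)
      show ?thesis using ih True
        by (simp only: e) (auto simp: a v power2_eq_square algebra_simps)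
    next
      case False
      hence xe: "x = Suc y" using x by simp
      from Suc.IH have ih: "LA q y y \<ge> 1" "LV q y y \<le> LA q y y * (LA q y y - 1)"
        "2 * LV q y y + LA q y y - (LA q y y)^2 \<le> q / (1-q)^2"
        "(1-q) * LA q y y \<le> 1" by auto
      define a where "a = LA q y y"
      define v where "v = LV q y y"
      have A: "LA q x (Suc y) = 1 + q * a" by (simp add: xe a_def LA_diag)
      have V: "LV q x (Suc y) = q * (v + a)" by (simp add: xe a_def v_def LV_diag)
      have a1: "a \<ge> 1" and vb: "v \<le> a * (a - 1)" and db: "2*v + a - a^2 \<le> q/(1-q)^2"
        and t: "(1-q)*a \<le> 1" using ih by (auto simp: a_def v_def)
      have c1: "1 + q * a \<ge> 1" using a1 q by simp
      have c2: "q * (v + a) \<le> (1 + q*a) * (1 + q*a - 1)"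
      proof -
        have "q * (v + a) \<le> q * (a*a)" using vb q by (intro mult_left_mono) (auto simp: algebra_simps)
        also have "\<dots> \<le> q * (a + q*a*a)"
        proof -
          have "a * ((1-q)*a) \<le> a * 1" using t a1 by (intro mult_left_mono) auto
          hence "a * a * (1-q) \<le> a" by (simp add: algebra_simps)
          hence "a*a \<le> a + q*a*a" by (simp add: algebra_simps)
          thus ?thesis using q by (intro mult_left_mono) auto
        qed
        finally show ?thesis by (simp add: algebra_simps)
      qed
      have c3: "2 * (q * (v + a)) + (1 + q*a) - (1 + q*a)^2 \<le> q/(1-q)^2"
      proof -
        have e: "2 * (q * (v + a)) + (1 + q*a) - (1 + q*a)^2 = q * ((2*v + a - a^2) + (1-q)*a*a)"
          by (simp add: power2_eq_square algebra_simps)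
        have "a * ((1-q)*a) \<le> a * 1" using t a1 by (intro mult_left_mono) auto
        hence h1: "(1-q)*a*a \<le> a" by (simp add: algebra_simps)
        have h2: "a \<le> 1/(1-q)" using t q by (simp add: field_simps)
        have nz: "1 - q \<noteq> 0" using q by simp
        have "q/(1-q)^2 + 1/(1-q) = q/(1-q)^2 + (1-q)/(1-q)^2" using nz by (simp add: power2_eq_square)
        also have "\<dots> = (q + (1-q))/(1-q)^2" by (simp only: add_divide_distrib[symmetric])
        finally have h3: "q/(1-q)^2 + 1/(1-q) = 1/(1-q)^2" by simp
        have "(2*v + a - a^2) + (1-q)*a*a \<le> 1/(1-q)^2" using db h1 h2 h3 by linarith
        hence "q * ((2*v + a - a^2) + (1-q)*a*a) \<le> q * (1/(1-q)^2)" using q by (intro mult_left_mono) auto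
        thus ?thesis by (simp only: e) simp
      qed
      have c4: "(1-q) * (1 + q*a) \<le> 1"
      proof -
        have "q * ((1-q)*a) \<le> q" using t q by (simp add: mult_left_le)
        thus ?thesis by (simp add: algebra_simps)
      qed
      show ?thesis using c1 c2 c3 c4 by (simp only: A V) simp
    qed
  qed
qed


definition RB :: "real \<Rightarrow> nat \<Rightarrow> nat \<Rightarrow> real" where
  "RB q y n = (\<Sum>j=Suc y..n. q ^ (j - y))"
definition RU :: "real \<Rightarrow> nat \<Rightarrow> nat \<Rightarrow> real" where
  "RU q y n = (\<Sum>j=Suc y..n. (real j - real y) * q ^ (j - y))"

lemma right_closed_K:
  shows "(1-q) * RB q y (K+y) = q - q ^ (K + 1) \<and> (1-q) * RU q y (K+y) = RB q y (K+y) - real K * q ^ (K + 1)"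
proof (induction K)
  case 0
  then show ?case by (simp add: RB_def RU_def)
next
  case (Suc K)
  have b: "RB q y (Suc (K + y)) = RB q y (K+y) + q ^ (Suc K)" by (simp add: RB_def)
  have u: "RU q y (Suc (K + y)) = RU q y (K+y) + real (Suc K) * q ^ (Suc K)" by (simp add: RU_def )
  have i1: "q * q ^ K + RB q y (K + y) = q + q * RB q y (K + y)"
    and i2: "RU q y (K + y) + q * (real K * q ^ K) = RB q y (K + y) + q * RU q y (K + y)"
    using Suc.IH by (simp_all add: algebra_simps)
  have h1: "q * (q * q ^ K + RB q y (K + y)) = q * (q + q * RB q y (K + y))" using i1 by simp
  have h2: "q * (RU q y (K + y) + q * (real K * q ^ K)) = q * (RB q y (K + y) + q * RU q y (K + y))" using i2 by simp
  define R where "R = RB q y (K + y)"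
  define U where "U = RU q y (K + y)"
  define P where "P = q ^ K"
  have h1': "q*(q*P) + q*R = q*q + q*(q*R)" using h1 unfolding R_def P_def by (simp add: algebra_simps)
  have h2': "q*U + q*(q*(real K*P)) = q*R + q*(q*U)" using h2 unfolding R_def P_def U_def by (simp add: algebra_simps)
  have i1': "q * P + R = q + q * R" using i1 unfolding R_def P_def .
  have g1: "(1-q) * (R + q * P) = q - q * (q * P)" using h1' i1' by (simp add: algebra_simps)
  have g2: "(1-q) * (U + (1 + real K) * (q * P)) = (R + q * P) - (1 + real K) * (q * (q * P))"
    using h2' i1' i2 unfolding R_def P_def U_def[symmetric] by (simp add: algebra_simps; linarith)
  show ?case using g1 g2 by (simp add: b u R_def U_def P_def)
qed

lemma right_closed:
  assumes "y \<le> n"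
  shows "(1-q) * RB q y n = q - q ^ (n - y + 1) \<and> (1-q) * RU q y n = RB q y n - real (n - y) * q ^ (n - y + 1)"
  using right_closed_K[of q y "n-y"] assms by simp

lemma sum_split_at:
  assumes "y \<le> n"
  shows "(\<Sum>j=0..n. f j) = (\<Sum>j=0..y. f j) + (\<Sum>j=Suc y..n. f j)"
proof -
  have "{0..n} = {0..y} \<union> {Suc y..n}" using assms by auto
  moreover have "{0..y} \<inter> {Suc y..n} = {}" by auto
  ultimately show ?thesis by (simp add: sum.union_disjoint)
qed

lemma sums_decomp:
  assumes "y \<le> n" and f1: "\<And>j. j \<le> y \<Longrightarrow> f j = g q x j"
    and f2: "\<And>j. y < j \<Longrightarrow> f j = c * q ^ (j - y)"
  shows "(\<Sum>j=0..n. f j) = LA q x y + c * RB q y n"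
    and "(\<Sum>j=0..n. real j * f j) = real y * LA q x y - LV q x y + c * (real y * RB q y n + RU q y n)"
proof -
  have l1: "(\<Sum>j=0..y. f j) = LA q x y" unfolding LA_def by (rule sum.cong) (auto simp: f1)
  have r1: "(\<Sum>j=Suc y..n. f j) = c * RB q y n" unfolding RB_def sum_distrib_left
    by (rule sum.cong) (auto simp: f2)
  show "(\<Sum>j=0..n. f j) = LA q x y + c * RB q y n"
    using sum_split_at[OF assms(1), of f] l1 r1 by simp
  have l2: "(\<Sum>j=0..y. real j * f j) = real y * LA q x y - LV q x y"
  proof -
    have "(\<Sum>j=0..y. real j * f j) = (\<Sum>j=0..y. real y * g q x j - (real y - real j) * g q x j)"
      by (rule sum.cong) (auto simp: f1 algebra_simps)
    thus ?thesis by (simp add: LA_def LV_def sum_subtractf sum_distrib_left)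
  qed
  have r2: "(\<Sum>j=Suc y..n. real j * f j) = c * (real y * RB q y n + RU q y n)"
  proof -
    have "(\<Sum>j=Suc y..n. real j * f j) = (\<Sum>j=Suc y..n. c * (real j * q ^ (j - y)))"
      by (rule sum.cong) (auto simp: f2 algebra_simps)
    also have "\<dots> = c * (\<Sum>j=Suc y..n. real j * q ^ (j - y))" by (simp add: sum_distrib_left)
    also have "(\<Sum>j=Suc y..n. real j * q ^ (j - y)) = real y * RB q y n + RU q y n"
      by (simp add: RU_def RB_def left_diff_distrib sum_subtractf sum_distrib_left)
    finally show ?thesis .
  qed
  show "(\<Sum>j=0..n. real j * f j) = real y * LA q x y - LV q x y + c * (real y * RB q y n + RU q y n)"
    using sum_split_at[OF assms(1), of "\<lambda>j. real j * f j"] l2 r2 by simp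
qed

lemma exp_pow: "exp (- (2*\<beta>*(real k))) = exp (- (2*\<beta>)) ^ k"
  by (metis exp_of_nat_mult mult.commute mult_minus_left mult.assoc)

lemma wt_form:
  assumes "x \<le> y"
  shows "wt \<beta> x y j = (if j \<le> y then g (exp (-2*\<beta>)) x j else exp (-2*\<beta>) ^ (j - y))"
proof -
  have a: "j < x \<Longrightarrow> exp (- (2 * \<beta> * (real x - real j))) = exp(-(2*\<beta>))^(x-j)"
    using exp_pow[of \<beta> "x-j"] by (simp add: of_nat_diff)
  have b: "y < j \<Longrightarrow> exp (- (2 * \<beta> * (real j - real y))) = exp(-(2*\<beta>))^(j-y)"
    using exp_pow[of \<beta> "j-y"] by (simp add: of_nat_diff)
  show ?thesis using assms a b by (auto simp: wt_def g_def)
qed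

lemma m_frac: "m \<beta> n x y = (\<Sum>j=0..n. real j * wt \<beta> x y j) / (\<Sum>j=0..n. wt \<beta> x y j)"
  by (simp add: m_def mu_def times_divide_eq_right sum_divide_distrib)


lemma key_ineq:
  fixes q A V B U z K :: real
  assumes q: "0 < q" "q < 1" and A1: "A \<ge> 1" and V0: "V \<ge> 0" and B0: "B \<ge> 0" and U0: "U \<ge> 0"
    and VA: "V \<le> A * (A - 1)" and DB: "2 * V + A - A^2 \<le> q / (1-q)^2"
    and z: "0 \<le> z" "z \<le> 1" and K: "K \<ge> 0"
    and hB: "(1-q) * B = q - q * z" and hU: "(1-q) * U = B - K * (q * z)"
  shows "2 * ((1-q) * (U*A + V*B)) \<le> (q*A + B) * (A + B)"
proof -
  define s where "s = 1 - z"
  define D where "D = 2 * V + A - A^2"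
  have s0: "0 \<le> s" "s \<le> 1" using z by (auto simp: s_def)
  have DA: "D \<le> A*A - A" using VA by (simp add: D_def power2_eq_square algebra_simps)
  have AA: "A*A - A \<ge> 0" using A1 by (simp add: mult_right_mono[of 1 A A, simplified])
  have a1: "s*s*D \<le> s*s*(q/(1-q)^2)" using DB s0 by (intro mult_left_mono) (auto simp: D_def)
  have a2: "s*D \<le> A*A - A"
  proof (cases "D \<ge> 0")
    case True
    hence "s*D \<le> 1*D" using s0 by (intro mult_right_mono) auto
    thus ?thesis using DA by simp
  next
    case False
    hence "s*D \<le> 0" using s0 by (simp add: mult_nonneg_nonpos)
    thus ?thesis using AA by simp
  qed
  have a3: "z*(s*D) \<le> z*(A*A - A)" using a2 z by (intro mult_left_mono) auto
  have sD: "s*D = s*s*D + z*(s*D)" by (simp add: s_def algebra_simps)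
  have stepa: "s*D \<le> s*s*(q/(1-q)^2) + z*(A*A - A)" using a1 a3 sD by linarith
  have nz: "1 - q \<noteq> 0" using q by simp
  have Bform: "B = q*s/(1-q)" using hB nz by (simp add: s_def field_simps)
  have stepb: "q*(s*s*(q/(1-q)^2)) = B*B" using nz by (simp add: Bform power2_eq_square field_simps)
  have qsD: "q*(s*D) \<le> B*B + q*(z*(A*A - A))"
  proof -
    have "q*(s*D) \<le> q*(s*s*(q/(1-q)^2) + z*(A*A - A))" using stepa q by (intro mult_left_mono) auto
    thus ?thesis using stepb by (simp add: algebra_simps)
  qed
  have e1: "A*((1-q)*B) = A*(q - q*z)" using hB by simp
  have e2: "A*((1-q)*U) = A*(B - K*(q*z))" using hU by simp
  have e3: "V*((1-q)*B) = V*(q - q*z)" using hB by simp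
  have pos: "A*q*z + 2*A*K*q*z \<ge> 0" using A1 q z K by simp
  have V2: "2*V = D + A*A - A" by (simp add: D_def power2_eq_square)
  have "2 * ((1-q) * (U*A + V*B)) = 2*(A*((1-q)*U)) + (2*V)*((1-q)*B)"
    by (simp add: algebra_simps)
  also have "\<dots> = 2*(A*(B - K*(q*z))) + (D + A*A - A)*(q - q*z)"
    by (simp only: e2 V2 hB)
  also have "\<dots> = 2*A*B - 2*A*K*q*z + q*(s*D) + q*s*(A*A - A)" by (simp add: s_def algebra_simps)
  also have "\<dots> \<le> 2*A*B - 2*A*K*q*z + B*B + q*(z*(A*A - A)) + q*s*(A*A - A)" using qsD by linarith
  also have "\<dots> = 2*A*B - 2*A*K*q*z + B*B + q*(A*A - A)" by (simp add: s_def algebra_simps)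
  also have "\<dots> \<le> (q*A + B) * (A + B)"
  proof -
    have "(q*A + B) * (A + B) - (2*A*B - 2*A*K*q*z + B*B + q*(A*A - A)) = 2*A*K*q*z + (A*q - A*((1-q)*B))"
      by (simp add: algebra_simps)
    moreover have "2*A*K*q*z + (A*q - A*((1-q)*B)) = A*q*z + 2*A*K*q*z" using e1 by (simp add: algebra_simps)
    ultimately show ?thesis using pos by linarith
  qed
  finally show ?thesis .
qed


lemma ystep:
  assumes b: "\<beta> > 0" and xy: "x \<le> y" and yn: "y < n"
  shows "0 \<le> m \<beta> n x (Suc y) - m \<beta> n x y \<and> m \<beta> n x (Suc y) - m \<beta> n x y \<le> 1/2"
proof -
  define q where "q = exp (-2*\<beta>)"
  have q: "0 < q" "q < 1" using b by (auto simp: q_def)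
  have w1: "\<And>j. j \<le> y \<Longrightarrow> wt \<beta> x y j = g q x j" using wt_form[OF xy] by (simp add: q_def)
  have w2: "\<And>j. y < j \<Longrightarrow> wt \<beta> x y j = 1 * q ^ (j - y)" using wt_form[OF xy] by (simp add: q_def)
  have xy': "x \<le> Suc y" using xy by simp
  have w1': "\<And>j. j \<le> y \<Longrightarrow> wt \<beta> x (Suc y) j = g q x j" using wt_form[OF xy'] by (simp add: q_def)
  have w2': "\<And>j. y < j \<Longrightarrow> wt \<beta> x (Suc y) j = (1/q) * q ^ (j - y)"
  proof -
    fix j assume j: "y < j"
    show "wt \<beta> x (Suc y) j = (1/q) * q ^ (j - y)"
    proof (cases "j = Suc y")
      case True
      then show ?thesis using wt_form[OF xy'] q xy by (simp add: q_def g_def)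
    next
      case False
      hence "j - y = Suc (j - Suc y)" using j by simp
      then show ?thesis using wt_form[OF xy'] q False j by (simp add: q_def)
    qed
  qed
  have yn': "y \<le> n" using yn by simp
  note d1 = sums_decomp[OF yn' w1 w2] and d2 = sums_decomp[OF yn' w1' w2']
  define A where "A = LA q x y"
  define V where "V = LV q x y"
  define B where "B = RB q y n"
  define U where "U = RU q y n"
  define K where "K = n - y"
  define z where "z = q ^ K"
  have li: "LA q x y \<ge> 1 \<and> LV q x y \<le> LA q x y * (LA q x y - 1)
     \<and> 2 * LV q x y + LA q x y - (LA q x y)^2 \<le> q / (1-q)^2" using left_inv[OF q, of y] xy by blast
  hence A1: "A \<ge> 1" and VA: "V \<le> A*(A-1)" and DB: "2 * V + A - A^2 \<le> q / (1-q)^2"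
    by (auto simp: A_def V_def)
  have V0: "V \<ge> 0" unfolding V_def LV_def by (rule sum_nonneg) (use q in \<open>auto simp: g_def\<close>)
  have B0: "B \<ge> 0" unfolding B_def RB_def by (rule sum_nonneg) (use q in auto)
  have U0: "U \<ge> 0" unfolding U_def RU_def by (rule sum_nonneg) (use q in auto)
  have rc: "(1-q) * B = q - q * z \<and> (1-q) * U = B - real K * (q * z)"
    using right_closed[OF yn', of q] by (simp add: B_def U_def z_def K_def)
  have z: "0 \<le> z" "z \<le> 1" using q by (auto simp: z_def power_le_one)
  have key: "2 * ((1-q) * (U*A + V*B)) \<le> (q*A + B) * (A + B)"
    by (rule key_ineq[OF q A1 V0 B0 U0 VA DB z _ conjunct1[OF rc] conjunct2[OF rc]]) simp
  have m1: "m \<beta> n x y = (real y * A - V + 1 * (real y * B + U)) / (A + 1 * B)"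
    by (simp only: m_frac d1 A_def V_def B_def U_def)
  have m2: "m \<beta> n x (Suc y) = (real y * A - V + (1/q) * (real y * B + U)) / (A + (1/q) * B)"
    by (simp only: m_frac d2 A_def V_def B_def U_def)
  have p1: "A + B > 0" using A1 B0 by simp
  have p2: "q*A + B > 0" using A1 B0 q by (simp add: add_pos_nonneg)
  have diff: "m \<beta> n x (Suc y) - m \<beta> n x y = ((1-q) * (U*A + V*B)) / ((q*A + B) * (A + B))"
  proof -
    have e1: "m \<beta> n x y = real y + (U - V)/(A + B)" using m1 p1 by (simp add: field_simps)
    have n1: "real y * A - V + (1/q) * (real y * B + U) = (q*(real y * A - V) + (real y*B+U))/q"
      using q by (simp add: field_simps)
    have n2: "A + (1/q)*B = (q*A + B)/q" using q by (simp add: field_simps)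
    have e2a: "m \<beta> n x (Suc y) = (q*(real y * A - V) + (real y*B+U))/(q*A + B)"
      unfolding m2 n1 n2 using q p2 by simp
    have e2: "m \<beta> n x (Suc y) = real y + (U - q*V)/(q*A + B)" using e2a p2
      by (simp add: field_simps)
    show ?thesis unfolding e1 e2 using p1 p2 by (simp add: field_simps)
  qed
  have N0: "(1-q) * (U*A + V*B) \<ge> 0" using q U0 A1 V0 B0 by simp
  have den: "(q*A + B) * (A + B) > 0" using p1 p2 by simp
  show ?thesis
  proof
    show "0 \<le> m \<beta> n x (Suc y) - m \<beta> n x y" unfolding diff using N0 den by simp
    show "m \<beta> n x (Suc y) - m \<beta> n x y \<le> 1/2" unfolding diff using key den by (simp add: divide_simps)
  qed
qed


lemma wt_pos: "wt \<beta> x y j > 0"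
  by (simp add: wt_def)

lemma wt_refl:
  assumes "x \<le> y" "y \<le> n" "j \<le> n"
  shows "wt \<beta> x y (n - j) = wt \<beta> (n-y) (n-x) j"
proof -
  consider "n - j < x" | "x \<le> n - j" "n - j \<le> y" | "y < n - j" by linarith
  then show ?thesis
  proof cases
    case 1
    hence "n - x < j" "\<not> j \<le> n - x" using assms by auto
    moreover have "real x - real (n - j) = real j - real (n - x)" using assms 1 by (simp add: of_nat_diff)
    ultimately show ?thesis using 1 assms by (auto simp: wt_def)
  next
    case 2
    hence "\<not> j < n - y" "j \<le> n - x" using assms by auto
    then show ?thesis using 2 by (auto simp: wt_def)
  next
    case 3
    hence "j < n - y" "\<not> n - j < x" "\<not> n - j \<le> y" using assms by auto
    moreover have "real (n - j) - real y = real (n - y) - real j" using assms 3 by (simp add: of_nat_diff)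
    ultimately show ?thesis by (auto simp: wt_def)
  qed
qed

lemma m_refl:
  assumes "x \<le> y" "y \<le> n"
  shows "m \<beta> n x y = real n - m \<beta> n (n-y) (n-x)"
proof -
  define w where "w = wt \<beta> (n-y) (n-x)"
  have Z: "(\<Sum>j=0..n. wt \<beta> x y j) = (\<Sum>j=0..n. w j)"
  proof -
    have "(\<Sum>j=0..n. wt \<beta> x y j) = (\<Sum>j=0..n. wt \<beta> x y (n - j))"
      using sum.atLeastAtMost_rev[of "wt \<beta> x y" 0 n] by simp
    also have "\<dots> = (\<Sum>j=0..n. w j)" by (rule sum.cong) (auto simp: w_def wt_refl assms)
    finally show ?thesis .
  qed
  have S: "(\<Sum>j=0..n. real j * wt \<beta> x y j) = real n * (\<Sum>j=0..n. w j) - (\<Sum>j=0..n. real j * w j)"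
  proof -
    have "(\<Sum>j=0..n. real j * wt \<beta> x y j) = (\<Sum>j=0..n. real (n - j) * wt \<beta> x y (n - j))"
      using sum.atLeastAtMost_rev[of "\<lambda>j. real j * wt \<beta> x y j" 0 n] by simp
    also have "\<dots> = (\<Sum>j=0..n. real n * w j - real j * w j)"
      by (rule sum.cong) (auto simp: w_def wt_refl assms of_nat_diff algebra_simps)
    finally show ?thesis by (simp add: sum_subtractf sum_distrib_left)
  qed
  have pos: "(\<Sum>j=0..n. w j) > 0" unfolding w_def by (rule sum_pos) (auto simp: wt_pos)
  show ?thesis unfolding m_frac Z S using pos by (simp add: w_def field_simps)
qed

lemma xstep:
  assumes b: "\<beta> > 0" and xy: "x < y" and yn: "y \<le> n"
  shows "0 \<le> m \<beta> n (Suc x) y - m \<beta> n x y \<and> m \<beta> n (Suc x) y - m \<beta> n x y \<le> 1/2"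
proof -
  have r1: "m \<beta> n x y = real n - m \<beta> n (n-y) (Suc (n - Suc x))"
    using m_refl[of x y n \<beta>] xy yn by (simp add: Suc_diff_Suc)
  have r2: "m \<beta> n (Suc x) y = real n - m \<beta> n (n-y) (n - Suc x)"
    using m_refl[of "Suc x" y n \<beta>] xy yn by simp
  have "0 \<le> m \<beta> n (n-y) (Suc (n - Suc x)) - m \<beta> n (n-y) (n - Suc x) \<and>
        m \<beta> n (n-y) (Suc (n - Suc x)) - m \<beta> n (n-y) (n - Suc x) \<le> 1/2"
    by (rule ystep[OF b]) (use xy yn in auto)
  thus ?thesis unfolding r1 r2 by simp
qed

lemma ychain:
  assumes b: "\<beta> > 0" and xy: "x \<le> y"
  shows "y + k \<le> n \<Longrightarrow> 0 \<le> m \<beta> n x (y+k) - m \<beta> n x y \<and> m \<beta> n x (y+k) - m \<beta> n x y \<le> real k/2"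
proof (induction k)
  case 0 then show ?case by simp
next
  case (Suc k)
  have "0 \<le> m \<beta> n x (Suc (y+k)) - m \<beta> n x (y+k) \<and> m \<beta> n x (Suc (y+k)) - m \<beta> n x (y+k) \<le> 1/2"
    by (rule ystep[OF b]) (use xy Suc.prems in auto)
  with Suc show ?case by auto
qed

lemma xchain:
  assumes b: "\<beta> > 0" and yn: "y \<le> n"
  shows "x + k \<le> y \<Longrightarrow> 0 \<le> m \<beta> n (x+k) y - m \<beta> n x y \<and> m \<beta> n (x+k) y - m \<beta> n x y \<le> real k/2"
proof (induction k)
  case 0 then show ?case by simp
next
  case (Suc k)
  have "0 \<le> m \<beta> n (Suc (x+k)) y - m \<beta> n (x+k) y \<and> m \<beta> n (Suc (x+k)) y - m \<beta> n (x+k) y \<le> 1/2"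
    by (rule xstep[OF b]) (use yn Suc.prems in auto)
  with Suc show ?case by auto
qed


theorem corollary3p3:
  fixes \<beta> :: real and n i :: nat and \<eta> \<xi> :: "nat \<Rightarrow> nat"
  assumes "\<beta> > 0" and "n \<ge> 1"
    and "\<eta> \<in> Omega n" and "\<xi> \<in> Omega n" and "preceq n \<eta> \<xi>"
    and "i \<in> {1..n}"
  defines "a \<equiv> min (bnd n \<xi> (i-1)) (bnd n \<xi> (i+1))"
    and "b \<equiv> max (bnd n \<xi> (i-1)) (bnd n \<xi> (i+1))"
    and "c \<equiv> min (bnd n \<eta> (i-1)) (bnd n \<eta> (i+1))"
    and "d \<equiv> max (bnd n \<eta> (i-1)) (bnd n \<eta> (i+1))"
  shows "0 \<le> m \<beta> n a b - m \<beta> n c d \<and>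
         m \<beta> n a b - m \<beta> n c d \<le> (real a + real b)/2 - (real c + real d)/2"
proof -
  have mono: "\<And>k. k \<le> n+1 \<Longrightarrow> bnd n \<eta> k \<le> bnd n \<xi> k" using assms(5) unfolding bnd_def preceq_def
    by (auto simp: not_less_eq_eq)
  have bndn: "\<And>k. k \<le> n+1 \<Longrightarrow> bnd n \<xi> k \<le> n" using assms(4) unfolding bnd_def Omega_def
    by (auto simp: not_less_eq_eq)
  have m1: "bnd n \<eta> (i-1) \<le> bnd n \<xi> (i-1)" by (rule mono) (use assms(6) in auto)
  have m2: "bnd n \<eta> (i+1) \<le> bnd n \<xi> (i+1)" by (rule mono) (use assms(6) in auto)
  have ca: "c \<le> a" and db: "d \<le> b" using m1 m2
    by (auto simp: a_def b_def c_def d_def min_def max_def)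
  have cd: "c \<le> d" and ab: "a \<le> b" by (auto simp: a_def b_def c_def d_def)
  have bn: "b \<le> n" using bndn[of "i-1"] bndn[of "i+1"] assms(6) by (auto simp: b_def)
  have h1: "0 \<le> m \<beta> n (c + (a-c)) b - m \<beta> n c b \<and> m \<beta> n (c + (a-c)) b - m \<beta> n c b \<le> real (a-c)/2"
    by (rule xchain[OF assms(1) bn]) (use ca ab in simp)
  have h2: "0 \<le> m \<beta> n c (d + (b-d)) - m \<beta> n c d \<and> m \<beta> n c (d + (b-d)) - m \<beta> n c d \<le> real (b-d)/2"
    by (rule ychain[OF assms(1) cd]) (use db bn in simp)
  have e1: "c + (a - c) = a" using ca by simp
  have e2: "d + (b - d) = b" using db by simp
  have r: "real (a-c) = real a - real c" "real (b-d) = real b - real d" using ca db by (auto simp: of_nat_diff)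
  show ?thesis using h1 h2 unfolding e1 e2 r by (auto simp: field_simps)
qed

end
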